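(* Let $\mathfrak{G}$ be any graph with maximum degree $\mathfrak{d}\ge2$. Given any node $a$ of $\mathfrak{G}$ and any weight $w\in\mathbb{Z}_{>0}$, the number of connected clusters $\mathbf{W}$ with $a\in\mathbf{W}$ and $|\mathbf{W}|=w$ is at most $e\mathfrak{d}(1+e(\mathfrak{d}-1))^{w-1}$. If $\mathfrak{d}=1$, the number is at most $w$.
   Context: A cluster on a graph $\mathfrak{G}$ is a finite multiset of vertices, i.e. a finitely supported function $\mu$ from vertices to $\mathbb{Z}_{\ge0}$; its total weight is $|\mathbf{W}|=\sum_v\mu(v)$, its support is $\{v:\mu(v)\ge1\}$, and $a\in\mathbf{W}$ means $\mu(a)\ge1$. A cluster is connected if the subgraph of $\mathfrak{G}$ induced on its support is connected. *)

theory Defs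
  imports Complex_Main
begin

definition simple_graph :: "('a \<Rightarrow> 'a \<Rightarrow> bool) \<Rightarrow> bool" where
  "simple_graph E \<longleftrightarrow> (\<forall>x y. E x y \<longrightarrow> E y x) \<and> (\<forall>x. \<not> E x x)"

definition degree :: "('a \<Rightarrow> 'a \<Rightarrow> bool) \<Rightarrow> 'a \<Rightarrow> nat" where
  "degree E x = card {y. E x y}"

definition max_degree :: "('a \<Rightarrow> 'a \<Rightarrow> bool) \<Rightarrow> nat \<Rightarrow> bool" where
  "max_degree E d \<longleftrightarrow> (\<forall>x. finite {y. E x y} \<and> degree E x \<le> d) \<and> (\<exists>x. degree E x = d)"

text \<open>Clusters: finitely supported multiplicity functions.\<close>
definition cluster_support :: "('a \<Rightarrow> nat) \<Rightarrow> 'a set" where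
  "cluster_support \<mu> = {v. 1 \<le> \<mu> v}"

definition is_cluster :: "('a \<Rightarrow> nat) \<Rightarrow> bool" where
  "is_cluster \<mu> \<longleftrightarrow> finite (cluster_support \<mu>)"

definition cluster_weight :: "('a \<Rightarrow> nat) \<Rightarrow> nat" where
  "cluster_weight \<mu> = (\<Sum>v\<in>cluster_support \<mu>. \<mu> v)"

definition induced_connected :: "('a \<Rightarrow> 'a \<Rightarrow> bool) \<Rightarrow> 'a set \<Rightarrow> bool" where
  "induced_connected E S \<longleftrightarrow>
     (\<forall>x\<in>S. \<forall>y\<in>S. (x, y) \<in> {(u, v). u \<in> S \<and> v \<in> S \<and> E u v}\<^sup>*)"

definition connected_cluster :: "('a \<Rightarrow> 'a \<Rightarrow> bool) \<Rightarrow> ('a \<Rightarrow> nat) \<Rightarrow> bool" where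
  "connected_cluster E \<mu> \<longleftrightarrow> is_cluster \<mu> \<and> induced_connected E (cluster_support \<mu>)"

end

theory Submission
  imports Defs "HOL-Library.FuncSet"
begin

definition RS :: "('a \<Rightarrow> 'a \<Rightarrow> bool) \<Rightarrow> 'a set \<Rightarrow> ('a \<times> 'a) set" where
  "RS E S = {(u, v). u \<in> S \<and> v \<in> S \<and> E u v}"

lemma ic_RS: "induced_connected E S \<longleftrightarrow> (\<forall>x\<in>S. \<forall>y\<in>S. (x, y) \<in> (RS E S)\<^sup>*)"
  by (simp add: induced_connected_def RS_def)

lemma weight_sum:
  assumes "finite A" "cluster_support f \<subseteq> A"
  shows "cluster_weight f = (\<Sum>x\<in>A. f x)"
  unfolding cluster_weight_def
  by (rule sum.mono_neutral_left) (use assms in \<open>auto simp: cluster_support_def\<close>)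

lemma weight_ge:
  assumes "is_cluster f" shows "f x \<le> cluster_weight f"
proof (cases "1 \<le> f x")
  case True
  then show ?thesis using assms unfolding cluster_weight_def is_cluster_def
    by (intro member_le_sum) (auto simp: cluster_support_def)
qed auto

locale G =
  fixes E :: "'a \<Rightarrow> 'a \<Rightarrow> bool"
  assumes sym: "E x y \<Longrightarrow> E y x"
  and finN: "finite {y. E x y}"
begin

definition comp :: "'a set \<Rightarrow> 'a \<Rightarrow> 'a \<Rightarrow> 'a set" where
  "comp S v b = {u. (b, u) \<in> (RS E (S - {v}))\<^sup>*}"

definition rep :: "'a \<Rightarrow> 'a set \<Rightarrow> 'a" where
  "rep v K = (SOME b. b \<in> K \<and> E v b)"

definition piece :: "('a \<Rightarrow> nat) \<Rightarrow> 'a \<Rightarrow> 'a \<Rightarrow> 'a \<Rightarrow> nat" where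
  "piece \<mu> v b = (if b \<in> cluster_support \<mu> - {v} \<and> rep v (comp (cluster_support \<mu>) v b) = b
      then (\<lambda>u. if u \<in> comp (cluster_support \<mu>) v b then \<mu> u else 0) else (\<lambda>_. 0))"

definition CC :: "'a \<Rightarrow> 'a set \<Rightarrow> nat \<Rightarrow> ('a \<Rightarrow> nat) set" where
  "CC v P n = {\<mu>. connected_cluster E \<mu> \<and> 1 \<le> \<mu> v \<and> (\<forall>p\<in>P. \<mu> p = 0) \<and> cluster_weight \<mu> \<le> n}"

lemma RS_sym: "(x, y) \<in> (RS E S)\<^sup>* \<Longrightarrow> (y, x) \<in> (RS E S)\<^sup>*"
proof -
  assume "(x, y) \<in> (RS E S)\<^sup>*"
  then have "(y, x) \<in> ((RS E S)\<inverse>)\<^sup>*" by (rule rtrancl_converseI)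
  moreover have "(RS E S)\<inverse> = RS E S" using sym by (auto simp: RS_def)
  ultimately show ?thesis by simp
qed

lemma comp_sub: "x \<in> comp S v b \<Longrightarrow> x = b \<or> x \<in> S - {v}"
  unfolding comp_def by (auto simp: RS_def elim: rtranclE)

lemma comp_self: "b \<in> comp S v b"
  unfolding comp_def by auto

lemma comp_eq: assumes "x \<in> comp S v b" shows "comp S v x = comp S v b"
proof -
  have bx: "(b, x) \<in> (RS E (S - {v}))\<^sup>*" using assms by (simp add: comp_def)
  then have xb: "(x, b) \<in> (RS E (S - {v}))\<^sup>*" by (rule RS_sym)
  show ?thesis unfolding comp_def
    using bx xb by (auto intro: rtrancl_trans)
qed

lemma comp_connected:
  assumes "b \<in> S - {v}" shows "induced_connected E (comp S v b)"
proof -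
  let ?K = "comp S v b"
  have main: "(b, y) \<in> (RS E ?K)\<^sup>*" if "(b, y) \<in> (RS E (S - {v}))\<^sup>*" for y
    using that
  proof (induction rule: rtrancl_induct)
    case base then show ?case by simp
  next
    case (step y z)
    have "y \<in> ?K" using step(1) by (simp add: comp_def)
    moreover have "z \<in> ?K" using step(1,2) by (simp add: comp_def)
    moreover have "E y z" using step(2) by (simp add: RS_def)
    ultimately have "(y, z) \<in> RS E ?K" by (simp add: RS_def)
    then show ?case using step(3) by simp
  qed
  show ?thesis unfolding ic_RS
  proof (intro ballI)
    fix x y assume "x \<in> ?K" "y \<in> ?K"
    then have "(b, x) \<in> (RS E ?K)\<^sup>*" "(b, y) \<in> (RS E ?K)\<^sup>*"
      using main by (auto simp: comp_def)
    then show "(x, y) \<in> (RS E ?K)\<^sup>*" by (meson RS_sym rtrancl_trans)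
  qed
qed

lemma exists_nb:
  assumes "induced_connected E S" "v \<in> S" "u \<in> S - {v}"
  shows "\<exists>b\<in>comp S v u. E v b"
proof -
  have "(u, v) \<in> (RS E S)\<^sup>*" using assms unfolding ic_RS by auto
  then have "u \<in> S - {v} \<longrightarrow> (\<exists>b. (u, b) \<in> (RS E (S - {v}))\<^sup>* \<and> E b v)"
  proof (induction rule: converse_rtrancl_induct)
    case base then show ?case by simp
  next
    case (step y z)
    show ?case
    proof
      assume y: "y \<in> S - {v}"
      show "\<exists>b. (y, b) \<in> (RS E (S - {v}))\<^sup>* \<and> E b v"
      proof (cases "z = v")
        case True
        then show ?thesis using step(1) by (auto simp: RS_def)
      next
        case False
        then have "z \<in> S - {v}" using step(1) by (auto simp: RS_def)
        then obtain b where b: "(z, b) \<in> (RS E (S - {v}))\<^sup>*" "E b v" using step(3) by auto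
        have "(y, z) \<in> RS E (S - {v})" using step(1) y \<open>z \<in> S - {v}\<close> by (auto simp: RS_def)
        then show ?thesis using b by (meson converse_rtrancl_into_rtrancl)
      qed
    qed
  qed
  then show ?thesis using assms(3) sym by (auto simp: comp_def)
qed


lemma rep_props:
  assumes "induced_connected E S" "v \<in> S" "u \<in> S - {v}"
  shows "rep v (comp S v u) \<in> comp S v u \<and> E v (rep v (comp S v u))"
  unfolding rep_def using exists_nb[OF assms] by (metis (mono_tags, lifting) someI_ex)

lemma piece_nonzero:
  assumes "piece \<mu> v b u \<noteq> 0"
  shows "b \<in> cluster_support \<mu> - {v} \<and> rep v (comp (cluster_support \<mu>) v b) = b
     \<and> u \<in> comp (cluster_support \<mu>) v b \<and> piece \<mu> v b u = \<mu> u"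
  using assms by (simp add: piece_def split: if_splits)

lemma piece_supp: "piece \<mu> v b u \<noteq> 0 \<Longrightarrow> u \<in> cluster_support \<mu> - {v}"
  using piece_nonzero comp_sub by metis

lemma piece_supp_sub: "cluster_support (piece \<mu> v b) \<subseteq> cluster_support \<mu> - {v}"
proof
  fix u assume "u \<in> cluster_support (piece \<mu> v b)"
  then have "piece \<mu> v b u \<noteq> 0" by (simp add: cluster_support_def)
  then show "u \<in> cluster_support \<mu> - {v}" by (rule piece_supp)
qed

context
  fixes \<mu> v P
  assumes cc: "connected_cluster E \<mu>" and mv: "1 \<le> \<mu> v" and avP: "\<forall>p\<in>P. \<mu> p = 0"
begin

abbreviation "S \<equiv> cluster_support \<mu>"
abbreviation "J \<equiv> {b. E v b} - P"

lemma vS: "v \<in> S" using mv by (simp add: cluster_support_def)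

lemma finS: "finite S" using cc by (simp add: connected_cluster_def is_cluster_def)

lemma icS: "induced_connected E S" using cc by (simp add: connected_cluster_def)

lemma finJ: "finite J" using finN by auto

lemma rep_at:
  assumes u: "u \<in> S - {v}"
  defines "b \<equiv> rep v (comp S v u)"
  shows "b \<in> J" "piece \<mu> v b u = \<mu> u" "\<And>b'. piece \<mu> v b' u \<noteq> 0 \<Longrightarrow> b' = b"
proof -
  have b1: "b \<in> comp S v u" "E v b" using rep_props[OF icS vS u] by (auto simp: b_def)
  have bS: "b \<in> S - {v}" using comp_sub[OF b1(1)] u by auto
  have ce: "comp S v b = comp S v u" using comp_eq[OF b1(1)] .
  then have rb: "rep v (comp S v b) = b" by (simp add: b_def)
  have "b \<notin> P" using avP bS by (auto simp: cluster_support_def)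
  then show "b \<in> J" using b1 by auto
  show "piece \<mu> v b u = \<mu> u" using bS rb ce comp_self[of u S v] by (simp add: piece_def)
  fix b' assume "piece \<mu> v b' u \<noteq> 0"
  from piece_nonzero[OF this] have "rep v (comp S v b') = b'" "u \<in> comp S v b'" by auto
  then show "b' = b" using comp_eq[of u S v b'] by (simp add: b_def)
qed

lemma sum_pieces: "(\<Sum>b\<in>J. piece \<mu> v b u) = (if u \<in> S - {v} then \<mu> u else 0)"
proof (cases "u \<in> S - {v}")
  case True
  define b where "b = rep v (comp S v u)"
  have "(\<Sum>b\<in>J. piece \<mu> v b u) = piece \<mu> v b u + (\<Sum>b\<in>J - {b}. piece \<mu> v b u)"
    using rep_at(1)[OF True] finJ by (simp add: b_def sum.remove)
  also have "(\<Sum>b\<in>J - {b}. piece \<mu> v b u) = 0"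
    using rep_at(3)[OF True] by (intro sum.neutral) (auto simp: b_def)
  finally show ?thesis using rep_at(2)[OF True] True by (simp add: b_def)
next
  case False
  then show ?thesis using piece_supp by (intro trans[OF sum.neutral]) auto
qed

lemma weight_pieces: "\<mu> v + (\<Sum>b\<in>J. cluster_weight (piece \<mu> v b)) = cluster_weight \<mu>"
proof -
  have "(\<Sum>b\<in>J. cluster_weight (piece \<mu> v b)) = (\<Sum>b\<in>J. \<Sum>u\<in>S - {v}. piece \<mu> v b u)"
    using finS piece_supp_sub by (intro sum.cong refl weight_sum) auto
  also have "\<dots> = (\<Sum>u\<in>S - {v}. \<Sum>b\<in>J. piece \<mu> v b u)" by (rule sum.swap)
  also have "\<dots> = (\<Sum>u\<in>S - {v}. \<mu> u)" using sum_pieces by simp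
  finally show ?thesis using finS vS unfolding cluster_weight_def by (simp add: sum.remove)
qed

lemma piece_mem:
  assumes "cluster_weight \<mu> \<le> Suc n" "b \<in> J"
  shows "piece \<mu> v b \<in> CC b {v} n \<union> {\<lambda>_. 0}"
proof (cases "b \<in> S - {v} \<and> rep v (comp S v b) = b")
  case True
  let ?K = "comp S v b"
  have pe: "piece \<mu> v b = (\<lambda>u. if u \<in> ?K then \<mu> u else 0)" using True by (simp add: piece_def)
  have KS: "?K \<subseteq> S - {v}" using comp_sub True by blast
  have supp: "cluster_support (piece \<mu> v b) = ?K"
    using KS by (auto simp: pe cluster_support_def)
  have "cluster_weight (piece \<mu> v b) \<le> (\<Sum>b\<in>J. cluster_weight (piece \<mu> v b))"
    using assms(2) finJ by (intro member_le_sum) auto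
  then have "cluster_weight (piece \<mu> v b) \<le> n" using weight_pieces assms(1) mv by linarith
  moreover have "connected_cluster E (piece \<mu> v b)"
    unfolding connected_cluster_def is_cluster_def supp
    using comp_connected[of b S v] True KS finS finite_subset by auto
  moreover have "1 \<le> piece \<mu> v b b" using True comp_self[of b S v]
    by (simp add: pe cluster_support_def)
  moreover have "v \<notin> ?K" using KS by blast
  then have "piece \<mu> v b v = 0" by (simp add: pe)
  ultimately show ?thesis by (simp add: CC_def)
next
  case False
  have "piece \<mu> v b = (\<lambda>_. 0)" unfolding piece_def by (rule if_not_P[OF False])
  then show ?thesis by simp
qed

end

lemma inj_pieces_aux:
  assumes "connected_cluster E \<mu>1" "1 \<le> \<mu>1 v" "\<forall>p\<in>P. \<mu>1 p = 0"
    and "\<mu>1 v = \<mu>2 v" and "\<forall>b\<in>{b. E v b} - P. piece \<mu>1 v b = piece \<mu>2 v b"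
    and "1 \<le> \<mu>1 u"
  shows "\<mu>2 u = \<mu>1 u"
proof (cases "u = v")
  case False
  then have u: "u \<in> cluster_support \<mu>1 - {v}" using assms(6) by (simp add: cluster_support_def)
  define b where "b = rep v (comp (cluster_support \<mu>1) v u)"
  have "b \<in> {b. E v b} - P" "piece \<mu>1 v b u = \<mu>1 u"
    using rep_at[OF assms(1-3) u] by (auto simp: b_def)
  then have "piece \<mu>2 v b u = \<mu>1 u" using assms(5) by auto
  then show ?thesis using piece_nonzero[of \<mu>2 v b u] assms(6) by auto
qed (use assms in auto)

lemma inj_pieces:
  assumes "\<mu>1 \<in> CC v P m" "\<mu>2 \<in> CC v P m"
    and "\<mu>1 v = \<mu>2 v" and "\<forall>b\<in>{b. E v b} - P. piece \<mu>1 v b = piece \<mu>2 v b"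
  shows "\<mu>1 = \<mu>2"
proof
  fix u
  show "\<mu>1 u = \<mu>2 u"
  proof (cases "1 \<le> \<mu>1 u")
    case True then show ?thesis using inj_pieces_aux[of \<mu>1 v P \<mu>2 u] assms unfolding CC_def mem_Collect_eq by metis
  next
    case F1: False
    show ?thesis
    proof (cases "1 \<le> \<mu>2 u")
      case True then show ?thesis using inj_pieces_aux[of \<mu>2 v P \<mu>1 u] assms unfolding CC_def mem_Collect_eq
        by metis
    qed (use F1 in auto)
  qed
qed


lemma CC_0: "CC v P 0 = {}"
  using weight_ge[of _ v] by (force simp: CC_def connected_cluster_def)

lemma phi_maps:
  assumes "\<mu> \<in> CC v P (Suc n)"
  shows "(\<mu> v, restrict (piece \<mu> v) ({b. E v b} - P))
     \<in> {1..Suc n} \<times> PiE ({b. E v b} - P) (\<lambda>b. CC b {v} n \<union> {\<lambda>_. 0})"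
proof -
  have cc: "connected_cluster E \<mu>" "1 \<le> \<mu> v" "\<forall>p\<in>P. \<mu> p = 0" "cluster_weight \<mu> \<le> Suc n"
    using assms by (auto simp: CC_def)
  have "\<mu> v \<le> Suc n" using weight_ge[of \<mu> v] cc by (auto simp: connected_cluster_def)
  moreover have "\<forall>b\<in>{b. E v b} - P. piece \<mu> v b \<in> CC b {v} n \<union> {\<lambda>_. 0}"
    using piece_mem[OF cc(1,2,3) cc(4)] by blast
  ultimately show ?thesis using cc(2) by (simp add: restrict_PiE_iff)
qed

lemma phi_inj: "inj_on (\<lambda>\<mu>. (\<mu> v, restrict (piece \<mu> v) ({b. E v b} - P))) (CC v P m)"
proof (rule inj_onI)
  fix \<mu>1 \<mu>2 assume a: "\<mu>1 \<in> CC v P m" "\<mu>2 \<in> CC v P m"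
    "(\<mu>1 v, restrict (piece \<mu>1 v) ({b. E v b} - P)) = (\<mu>2 v, restrict (piece \<mu>2 v) ({b. E v b} - P))"
  then have "\<mu>1 v = \<mu>2 v" by simp
  moreover have "\<forall>b\<in>{b. E v b} - P. piece \<mu>1 v b = piece \<mu>2 v b"
  proof
    fix b assume b: "b \<in> {b. E v b} - P"
    from a(3) have "restrict (piece \<mu>1 v) ({b. E v b} - P) b = restrict (piece \<mu>2 v) ({b. E v b} - P) b"
      by simp
    with b show "piece \<mu>1 v b = piece \<mu>2 v b" by simp
  qed
  ultimately show "\<mu>1 = \<mu>2" using inj_pieces a(1,2) by blast
qed

lemma CC_finite: "finite (CC v P n)"
proof (induction n arbitrary: v P)
  case 0 then show ?case by (simp add: CC_0)
next
  case (Suc n)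
  let ?phi = "\<lambda>\<mu>. (\<mu> v, restrict (piece \<mu> v) ({b. E v b} - P))"
  have "?phi ` CC v P (Suc n) \<subseteq> {1..Suc n} \<times> PiE ({b. E v b} - P) (\<lambda>b. CC b {v} n \<union> {\<lambda>_. 0})"
    using phi_maps by blast
  moreover have "finite ({1..Suc n} \<times> PiE ({b. E v b} - P) (\<lambda>b. CC b {v} n \<union> {\<lambda>_. 0}))"
    using Suc finN by (intro finite_cartesian_product finite_PiE) auto
  ultimately have "finite (?phi ` CC v P (Suc n))" by (rule finite_subset)
  then show ?case using phi_inj finite_imageD by blast
qed

lemma geom_bound:
  fixes z :: real assumes "0 < z" "z < 1"
  shows "(\<Sum>m\<in>{1..n}. z ^ m) \<le> z / (1 - z)"
proof -
  have "(1 - z) * (\<Sum>m\<in>{1..n}. z ^ m) = z - z ^ Suc n"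
  proof (induction n)
    case (Suc n)
    have "(1 - z) * (\<Sum>m\<in>{1..Suc n}. z ^ m) = (1 - z) * (\<Sum>m\<in>{1..n}. z ^ m) + (1 - z) * z ^ Suc n"
      by (simp add: algebra_simps)
    also have "\<dots> = z - z ^ Suc n + (1 - z) * z ^ Suc n" using Suc.IH by simp
    also have "\<dots> = z - z ^ Suc (Suc n)" by (simp add: algebra_simps)
    finally show ?case .
  qed simp
  moreover have "0 \<le> z ^ Suc n" using assms by simp
  ultimately have "(1 - z) * (\<Sum>m\<in>{1..n}. z ^ m) \<le> z" by linarith
  then show ?thesis using assms by (simp add: field_simps)
qed

lemma step:
  fixes z T :: real
  assumes z: "0 < z" "z < 1" and T: "0 \<le> T"
    and IH: "\<forall>b\<in>{b. E v b} - P. (\<Sum>\<mu>\<in>CC b {v} n. z ^ cluster_weight \<mu>) \<le> T"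
  shows "(\<Sum>\<mu>\<in>CC v P (Suc n). z ^ cluster_weight \<mu>) \<le> z / (1 - z) * (1 + T) ^ card ({b. E v b} - P)"
proof -
  define JJ where "JJ = {b. E v b} - P"
  define A where "A = (\<lambda>b. CC b {v} n \<union> {\<lambda>_. 0})"
  define phi where "phi = (\<lambda>\<mu>. (\<mu> v, restrict (piece \<mu> v) JJ))"
  define F where "F = (\<lambda>(m::nat, g::'a \<Rightarrow> 'a \<Rightarrow> nat). z ^ m * (\<Prod>b\<in>JJ. z ^ cluster_weight (g b)))"
  have finJ: "finite JJ" using finN by (auto simp: JJ_def)
  have finA: "\<And>b. finite (A b)" using CC_finite by (simp add: A_def)
  have eq: "z ^ cluster_weight \<mu> = F (phi \<mu>)" if "\<mu> \<in> CC v P (Suc n)" for \<mu>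
  proof -
    have cc: "connected_cluster E \<mu>" "1 \<le> \<mu> v" "\<forall>p\<in>P. \<mu> p = 0"
      using that by (auto simp: CC_def)
    have "F (phi \<mu>) = z ^ \<mu> v * (\<Prod>b\<in>JJ. z ^ cluster_weight (piece \<mu> v b))"
      by (simp add: F_def phi_def)
    also have "\<dots> = z ^ (\<mu> v + (\<Sum>b\<in>JJ. cluster_weight (piece \<mu> v b)))"
      by (simp add: power_add power_sum)
    also have "\<dots> = z ^ cluster_weight \<mu>" using weight_pieces[OF cc] by (simp add: JJ_def)
    finally show ?thesis by simp
  qed
  have "(\<Sum>\<mu>\<in>CC v P (Suc n). z ^ cluster_weight \<mu>) = (\<Sum>\<mu>\<in>CC v P (Suc n). F (phi \<mu>))"
    using eq by simp
  also have "\<dots> = (\<Sum>x\<in>phi ` CC v P (Suc n). F x)"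
    using phi_inj[of v P "Suc n"] by (simp add: sum.reindex phi_def JJ_def)
  also have "\<dots> \<le> (\<Sum>x\<in>{1..Suc n} \<times> PiE JJ A. F x)"
  proof (rule sum_mono2)
    show "finite ({1..Suc n} \<times> PiE JJ A)" using finJ finA by (intro finite_cartesian_product finite_PiE) auto
    show "phi ` CC v P (Suc n) \<subseteq> {1..Suc n} \<times> PiE JJ A"
    proof (rule image_subsetI)
      fix \<mu> assume "\<mu> \<in> CC v P (Suc n)"
      from phi_maps[OF this] show "phi \<mu> \<in> {1..Suc n} \<times> PiE JJ A"
        by (simp only: phi_def JJ_def A_def)
    qed
    show "\<And>x. x \<in> {1..Suc n} \<times> PiE JJ A - phi ` CC v P (Suc n) \<Longrightarrow> 0 \<le> F x"
      using z by (auto simp: F_def intro!: prod_nonneg mult_nonneg_nonneg)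
  qed
  also have "\<dots> = (\<Sum>m\<in>{1..Suc n}. \<Sum>g\<in>PiE JJ A. z ^ m * (\<Prod>b\<in>JJ. z ^ cluster_weight (g b)))"
    by (simp add: sum.cartesian_product F_def)
  also have "\<dots> = (\<Sum>m\<in>{1..Suc n}. z ^ m) * (\<Sum>g\<in>PiE JJ A. \<Prod>b\<in>JJ. z ^ cluster_weight (g b))"
    by (rule sum_product[symmetric])
  also have "(\<Sum>g\<in>PiE JJ A. \<Prod>b\<in>JJ. z ^ cluster_weight (g b)) = (\<Prod>b\<in>JJ. \<Sum>\<nu>\<in>A b. z ^ cluster_weight \<nu>)"
    using finJ finA by (simp add: prod_sum_PiE)
  also have "\<dots> \<le> (\<Prod>b\<in>JJ. 1 + T)"
  proof (rule prod_mono)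
    fix b assume b: "b \<in> JJ"
    have nz: "(\<lambda>_. 0) \<notin> CC b {v} n" by (simp add: CC_def)
    have w0: "cluster_weight (\<lambda>_::'a. 0::nat) = 0" by (simp add: cluster_weight_def cluster_support_def)
    have "(\<Sum>\<nu>\<in>A b. z ^ cluster_weight \<nu>) = 1 + (\<Sum>\<nu>\<in>CC b {v} n. z ^ cluster_weight \<nu>)"
      using nz CC_finite w0 by (simp add: A_def)
    then show "0 \<le> (\<Sum>\<nu>\<in>A b. z ^ cluster_weight \<nu>) \<and> (\<Sum>\<nu>\<in>A b. z ^ cluster_weight \<nu>) \<le> 1 + T"
    proof -
      have "0 \<le> (\<Sum>\<nu>\<in>CC b {v} n. z ^ cluster_weight \<nu>)" using z by (intro sum_nonneg) auto
      moreover have "(\<Sum>\<nu>\<in>CC b {v} n. z ^ cluster_weight \<nu>) \<le> T" using IH b by (auto simp: JJ_def)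
      ultimately show ?thesis using \<open>(\<Sum>\<nu>\<in>A b. z ^ cluster_weight \<nu>) = _\<close> by linarith
    qed
  qed
  also have "(\<Prod>b\<in>JJ. 1 + T) = (1 + T) ^ card JJ" by simp
  finally have "(\<Sum>\<mu>\<in>CC v P (Suc n). z ^ cluster_weight \<mu>) \<le> (\<Sum>m\<in>{1..Suc n}. z ^ m) * (1 + T) ^ card JJ"
    using z T by (simp add: mult_left_mono sum_nonneg)
  also have "\<dots> \<le> z / (1 - z) * (1 + T) ^ card JJ"
    using geom_bound[OF z, of "Suc n"] T by (intro mult_right_mono) (simp_all del: sum.cl_ivl_Suc)
  finally show ?thesis by (simp add: JJ_def)
qed

lemma bound:
  fixes z T :: real
  assumes z: "0 < z" "z < 1" and T: "0 \<le> T"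
    and deg: "\<And>x. card {y. E x y} \<le> d" and cond: "z / (1 - z) * (1 + T) ^ (d - 1) \<le> T"
  shows "E v p \<Longrightarrow> (\<Sum>\<mu>\<in>CC v {p} n. z ^ cluster_weight \<mu>) \<le> T"
proof (induction n arbitrary: v p)
  case 0 then show ?case using T by (simp add: CC_0)
next
  case (Suc n)
  have IH: "\<forall>b\<in>{b. E v b} - {p}. (\<Sum>\<mu>\<in>CC b {v} n. z ^ cluster_weight \<mu>) \<le> T"
    using Suc.IH sym by auto
  have "card ({b. E v b} - {p}) = card {b. E v b} - 1" using Suc.prems finN by (simp add: card_Diff_singleton)
  then have cJ: "card ({b. E v b} - {p}) \<le> d - 1" using deg[of v] by simp
  have "(\<Sum>\<mu>\<in>CC v {p} (Suc n). z ^ cluster_weight \<mu>) \<le> z / (1 - z) * (1 + T) ^ card ({b. E v b} - {p})"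
    by (rule step[OF z T IH])
  also have "\<dots> \<le> z / (1 - z) * (1 + T) ^ (d - 1)"
    using z T cJ by (intro mult_left_mono power_increasing) auto
  finally show ?case using cond by simp
qed

end
lemma e_ge: "5/2 \<le> exp (1::real)"
proof -
  have "(1 + 1/8::real) ^ 8 \<le> exp (1/8) ^ 8"
    by (intro power_mono exp_ge_add_one_self) auto
  also have "exp (1/8::real) ^ 8 = exp 1" using exp_of_nat_mult[of 8 "1/8::real", symmetric] by simp
  finally have "(9/8::real) ^ 8 \<le> exp 1" by simp
  moreover have "(5/2::real) \<le> (9/8) ^ 8" by (simp add: power_divide)
  ultimately show ?thesis by linarith
qed

lemma pow_e: fixes D :: real and k :: nat assumes "D = real k" "k > 0"
  shows "(1 + 1/D) ^ k \<le> exp 1"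
proof -
  have "(1 + 1/D) ^ k \<le> exp (1/D) ^ k"
    using assms by (intro power_mono exp_ge_add_one_self) auto
  also have "\<dots> = exp 1" using exp_of_nat_mult[of k "1/D", symmetric] assms by simp
  finally show ?thesis .
qed

lemma cond_arith:
  fixes d :: nat assumes "d \<ge> 2"
  defines "q \<equiv> 1 + exp 1 * (real d - 1)" and "T \<equiv> (if d = 2 then 2/3 else 1 / (real d - 1) :: real)"
  shows "(1/q) / (1 - 1/q) * (1 + T) ^ (d - 1) \<le> T"
proof -
  have e: "5/2 \<le> exp (1::real)" by (rule e_ge)
  have q1: "q > 1" using assms e unfolding q_def by (simp add: add_pos_pos)
  have "(1/q) / (1 - 1/q) = 1 / (q - 1)" using q1 by (simp add: field_simps)
  then have zq: "(1/q) / (1 - 1/q) = 1 / (exp 1 * (real d - 1))" by (simp add: q_def)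
  show ?thesis
  proof (cases "d = 2")
    case True
    have "(1/q) / (1 - 1/q) * (1 + T) ^ (d - 1) = 1 / (exp 1 * (real d - 1)) * (1 + T) ^ (d - 1)"
      by (simp only: zq)
    also have "\<dots> = (5/3) / exp 1" using True by (simp add: T_def)
    finally have "(1/q) / (1 - 1/q) * (1 + T) ^ (d - 1) = (5/3) / exp 1" .
    then show ?thesis using e True by (simp add: T_def field_simps)
  next
    case False
    then have d3: "d \<ge> 3" using assms by simp
    have D: "real d - 1 = real (d - 1)" using d3 by simp
    have "(1 + T) ^ (d - 1) \<le> exp 1" using pow_e[OF D] d3 False by (simp add: T_def)
    then have "(1 + T) ^ (d - 1) / (exp 1 * (real d - 1)) \<le> exp 1 / (exp 1 * (real d - 1))"
      using d3 by (intro divide_right_mono) auto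
    also have "\<dots> = T" using False by (simp add: T_def)
    finally show ?thesis by (simp only: zq) simp
  qed
qed

lemma final_arith:
  fixes d w :: nat and c :: real
  assumes "d \<ge> 2" "w > 0"
  defines "q \<equiv> 1 + exp 1 * (real d - 1)" and "T \<equiv> (if d = 2 then 2/3 else 1 / (real d - 1) :: real)"
  assumes c: "c * (1/q) ^ w \<le> (1/q) / (1 - 1/q) * (1 + T) ^ d"
  shows "c \<le> exp 1 * real d * q ^ (w - 1)"
proof -
  have e: "5/2 \<le> exp (1::real)" by (rule e_ge)
  have q1: "q > 1" using assms e unfolding q_def by (simp add: add_pos_pos)
  have K: "q / (q - 1) * (1 + T) ^ d \<le> exp 1 * real d"
  proof (cases "d = 2")
    case True
    have "q / (q - 1) * (1 + T) ^ d = (1 + exp 1) / exp 1 * (25/9)"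
      using True by (simp add: q_def T_def power2_eq_square)
    also have "\<dots> \<le> exp 1 * real d"
    proof -
      have "(5/2::real) * exp 1 \<le> exp 1 * exp (1::real)" using mult_right_mono[OF e, of "exp 1"] by simp
      moreover have "25*(1+x) \<le> 18*y" if "5/2 \<le> x" "5/2*x \<le> y" for x y :: real using that by (simp add: algebra_simps)
      ultimately have "25 * (1 + exp 1) \<le> 18 * (exp 1 * exp (1::real))" using e by blast
      then show ?thesis using True e by (simp add: field_simps)
    qed
    finally show ?thesis .
  next
    case False
    then have d3: "d \<ge> 3" using assms by simp
    define D where "D = real d - 1"
    have D2: "D \<ge> 2" using d3 by (simp add: D_def)
    have DD: "D = real (d - 1)" using d3 by (simp add: D_def)
    have T: "T = 1 / D" using False by (simp add: T_def D_def)
    have "(1 + T) ^ d = (1 + T) ^ (d - 1) * (1 + T)"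
      using d3 by (metis Suc_diff_1 less_le_trans not_le power_Suc2 zero_less_numeral Suc_n_not_le_n le_less_trans less_numeral_extra(1))
    also have "\<dots> \<le> exp 1 * (1 + 1/D)"
    proof -
      have "(1 + T) ^ (d - 1) \<le> exp 1" using pow_e[OF DD] d3 T by simp
      moreover have "0 \<le> 1 + T" using T D2 by simp
      ultimately show ?thesis using T by (simp add: mult_right_mono)
    qed
    finally have p: "(1 + T) ^ d \<le> exp 1 * (1 + 1/D)" .
    have qD: "q = 1 + exp 1 * D" by (simp add: q_def D_def)
    have "q / (q - 1) * (1 + T) ^ d \<le> q / (q - 1) * (exp 1 * (1 + 1/D))"
      using p q1 by (intro mult_left_mono) auto
    also have "\<dots> = (1 + exp 1 * D) * (D + 1) / (D * D)"
      using D2 e by (simp add: qD field_simps)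
    also have "\<dots> \<le> exp 1 * (D + 1)"
    proof -
      have "1 \<le> exp 1 * D * (D - 1)"
      proof -
        have "2 * 1 \<le> D * (D - 1)" using D2 by (intro mult_mono) auto
        then have "exp 1 * 2 \<le> exp 1 * (D * (D - 1))" using e by (intro mult_left_mono) auto
        moreover have "1 \<le> exp (1::real) * 2" using e by simp
        ultimately have "1 \<le> exp 1 * (D * (D - 1))" by linarith
        then show ?thesis by (simp add: mult.assoc)
      qed
      then have "1 + exp 1 * D \<le> exp 1 * (D * D)" by (simp add: algebra_simps)
      then have "(1 + exp 1 * D) * (D + 1) \<le> exp 1 * (D * D) * (D + 1)"
        using D2 by (intro mult_right_mono) auto
      then have "(1 + exp 1 * D) * (D + 1) \<le> exp 1 * (D + 1) * (D * D)" by (simp add: mult_ac)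
      then show ?thesis using D2 by (simp add: field_simps)
    qed
    also have "\<dots> = exp 1 * real d" by (simp add: D_def)
    finally show ?thesis .
  qed
  have qw: "q ^ w = q ^ (w - 1) * q" using assms(2) by (metis Suc_diff_1 power_Suc2)
  have "c \<le> (1/q) / (1 - 1/q) * (1 + T) ^ d / (1/q) ^ w"
    using c q1 by (simp add: field_simps)
  also have "\<dots> = q ^ (w - 1) * (q / (q - 1) * (1 + T) ^ d)"
    using q1 qw by (simp add: field_simps power_one_over)
  also have "\<dots> \<le> q ^ (w - 1) * (exp 1 * real d)"
    using K q1 by (intro mult_left_mono) auto
  finally show ?thesis by (simp add: mult_ac)
qed


theorem proposition3p6:
  fixes E :: "'a \<Rightarrow> 'a \<Rightarrow> bool" and d :: nat and a :: 'a and w :: nat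
  assumes "simple_graph E" and "max_degree E d" and "d \<ge> 1" and "w > 0"
  defines "N \<equiv> {\<mu>. connected_cluster E \<mu> \<and> \<mu> a \<ge> 1 \<and> cluster_weight \<mu> = w}"
  shows "finite N
    \<and> (d \<ge> 2 \<longrightarrow> real (card N) \<le> exp 1 * real d * (1 + exp 1 * (real d - 1)) ^ (w - 1))
    \<and> (d = 1 \<longrightarrow> card N \<le> w)"
proof -
  have symE: "\<And>x y. E x y \<Longrightarrow> E y x" and irr: "\<And>x. \<not> E x x"
    using assms(1) by (auto simp: simple_graph_def)
  have finN: "\<And>x. finite {y. E x y}" and deg: "\<And>x. card {y. E x y} \<le> d"
    using assms(2) by (auto simp: max_degree_def degree_def)
  interpret G E using symE finN by unfold_locales auto
  have NC: "N \<subseteq> CC a {} w" by (auto simp: N_def CC_def)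
  have finNN: "finite N" using CC_finite finite_subset[OF NC] by blast
  have part2: "real (card N) \<le> exp 1 * real d * (1 + exp 1 * (real d - 1)) ^ (w - 1)" if d2: "d \<ge> 2"
  proof -
    define q where "q = 1 + exp 1 * (real d - 1)"
    define T where "T = (if d = 2 then 2/3 else 1 / (real d - 1) :: real)"
    define z where "z = 1 / q"
    have e: "5/2 \<le> exp (1::real)" by (rule e_ge)
    have q1: "q > 1" using d2 e unfolding q_def by (simp add: add_pos_pos)
    have z: "0 < z" "z < 1" using q1 by (auto simp: z_def)
    have T: "0 \<le> T" using d2 by (simp add: T_def)
    have cond: "z / (1 - z) * (1 + T) ^ (d - 1) \<le> T"
      using cond_arith[OF d2] by (simp add: z_def q_def T_def)
    have "real (card N) * z ^ w = (\<Sum>\<mu>\<in>N. z ^ cluster_weight \<mu>)"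
      by (simp add: N_def)
    also have "\<dots> \<le> (\<Sum>\<mu>\<in>CC a {} (Suc (w - 1)). z ^ cluster_weight \<mu>)"
      using NC CC_finite z assms(4) by (intro sum_mono2) auto
    also have "\<dots> \<le> z / (1 - z) * (1 + T) ^ card ({b. E a b} - {})"
    proof (rule step[OF z T])
      show "\<forall>b\<in>{b. E a b} - {}. (\<Sum>\<mu>\<in>CC b {a} (w - 1). z ^ cluster_weight \<mu>) \<le> T"
        using bound[OF z T deg cond] symE by auto
    qed
    also have "\<dots> \<le> z / (1 - z) * (1 + T) ^ d"
      using z T deg[of a] by (intro mult_left_mono power_increasing) auto
    finally have "real (card N) * (1 / q) ^ w \<le> (1 / q) / (1 - 1 / q) * (1 + T) ^ d"
      by (simp add: z_def)
    from final_arith[OF d2 assms(4) this[unfolded q_def T_def]]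
    show ?thesis .
  qed
  have part1: "card N \<le> w" if d1: "d = 1"
  proof -
    have le1: "card {y. E x y} \<le> 1" for x using deg[of x] d1 by simp
    have reach: "cluster_support \<mu> \<subseteq> insert a {y. E a y}" if "\<mu> \<in> N" for \<mu>
    proof
      fix u assume u: "u \<in> cluster_support \<mu>"
      have aS: "a \<in> cluster_support \<mu>" using that by (simp add: N_def cluster_support_def)
      have "(a, u) \<in> (RS E (cluster_support \<mu>))\<^sup>*"
        using that u aS by (auto simp: N_def connected_cluster_def ic_RS)
      then show "u \<in> insert a {y. E a y}"
      proof (induction rule: rtrancl_induct)
        case base then show ?case by simp
      next
        case (step y z)
        have yz: "E y z" using step(2) by (simp add: RS_def)
        show ?case
        proof (cases "y = a")
          case True then show ?thesis using yz by simp
        next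
          case False
          then have "E y a" using step(3) symE by auto
          then have "z = a" using yz le1[of y] finN[of y] by (auto simp: card_le_Suc0_iff_eq)
          then show ?thesis by simp
        qed
      qed
    qed
    have wt: "cluster_weight \<mu> = w" if "\<mu> \<in> N" for \<mu> using that by (simp add: N_def)
    have zero: "\<mu> u = 0" if "\<mu> \<in> N" "u \<notin> insert a {y. E a y}" for \<mu> u
      using reach[OF that(1)] that(2) by (force simp: cluster_support_def)
    show ?thesis
    proof (cases "{y. E a y} = {}")
      case True
      have "N \<subseteq> {\<lambda>u. if u = a then w else 0}"
      proof
        fix \<mu> assume m: "\<mu> \<in> N"
        have "cluster_weight \<mu> = (\<Sum>x\<in>{a}. \<mu> x)" using reach[OF m] True by (intro weight_sum) auto
        then have "\<mu> a = w" using wt[OF m] by simp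
        moreover have "\<mu> u = 0" if "u \<noteq> a" for u using zero[OF m, of u] that True by simp
        ultimately show "\<mu> \<in> {\<lambda>u. if u = a then w else 0}" by (auto simp: fun_eq_iff)
      qed
      then have "card N \<le> card {\<lambda>u. if u = a then w else 0}" by (intro card_mono) simp_all
      then have "card N \<le> 1" by simp
      then show ?thesis using assms(4) by simp
    next
      case False
      then have "card {y. E a y} = 1" using le1[of a] finN[of a]
        by (metis One_nat_def card_0_eq le_SucE le_zero_eq)
      then obtain b where b: "{y. E a y} = {b}" using card_1_singletonE by blast
      have ba: "b \<noteq> a" using b irr by auto
      define f where "f = (\<lambda>k::nat. \<lambda>u. if u = a then k else if u = b then w - k else 0)"
      have "N \<subseteq> f ` {1..w}"
      proof
        fix \<mu> assume m: "\<mu> \<in> N"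
        have "cluster_weight \<mu> = (\<Sum>x\<in>{a, b}. \<mu> x)" using reach[OF m] b by (intro weight_sum) auto
        then have s: "\<mu> a + \<mu> b = w" using wt[OF m] ba by simp
        have "\<mu> = f (\<mu> a)"
        proof
          fix u show "\<mu> u = f (\<mu> a) u"
            using s zero[OF m, of u] b by (auto simp: f_def)
        qed
        moreover have "\<mu> a \<in> {1..w}" using s m by (auto simp: N_def)
        ultimately show "\<mu> \<in> f ` {1..w}" by blast
      qed
      then have "card N \<le> card (f ` {1..w})" by (intro card_mono) auto
      also have "\<dots> \<le> card {1..w}" by (rule card_image_le) simp
      finally show ?thesis by simp
    qed
  qed
  show ?thesis using finNN part1 part2 by blast
qed

end
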